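(* Let $x\in V$ be a non-leaf vertex of $T$. If $y$ is a vertex lying strictly below $r(x)$ on the path $\pi(s,u_{H_x})$, then $s$ is connected to $H_x$ in $G\setminus\{x,y\}$.
   Context: $G=(V,E)$ is a connected graph with no cut vertex, $T$ a BFS tree rooted at $s$, $\pi(u,v)$ the $T$-path, $T_x$ the subtree at $x$, $V_x=V(T_x)\setminus\{x\}$. $x_h$ is the heavy child of $x$ (child with largest subtree, ties broken consistently). $\mathcal{C}_x$ is the set of connected components of $G[V_x]$, and $H_x$ is the one containing $x_h$. A fixed edge $(u_{H_x},v_{H_x})\in E$ with $v_{H_x}\in H_x$ and $u_{H_x}\notin V(T_x)$ is chosen. $R(x)=\{v\in V\setminus V(T_x): v\text{ has a neighbour in }H_x\}$ and $r(x)$ is the lowest common ancestor in $T$ of all vertices of $R(x)$ (so $r(x)$ lies on $\pi(s,u_{H_x})$). *)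

theory Defs
  imports Main
begin

text \<open>Simple undirected graph: finite vertex set V, symmetric irreflexive edge relation E
  on V. A rooted tree is represented by its parent function par (par s is irrelevant).\<close>

definition adj_in :: "('a \<Rightarrow> 'a \<Rightarrow> bool) \<Rightarrow> 'a set \<Rightarrow> 'a \<Rightarrow> 'a \<Rightarrow> bool" where
  "adj_in E S a b \<longleftrightarrow> a \<in> S \<and> b \<in> S \<and> E a b"

definition reach_in :: "('a \<Rightarrow> 'a \<Rightarrow> bool) \<Rightarrow> 'a set \<Rightarrow> 'a \<Rightarrow> 'a \<Rightarrow> bool" where
  "reach_in E S a b \<longleftrightarrow> a \<in> S \<and> b \<in> S \<and> (adj_in E S)\<^sup>*\<^sup>* a b"

definition graph_connected :: "'a set \<Rightarrow> ('a \<Rightarrow> 'a \<Rightarrow> bool) \<Rightarrow> bool" where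
  "graph_connected V E \<longleftrightarrow> (\<forall>a\<in>V. \<forall>b\<in>V. reach_in E V a b)"

definition no_cut_vertex :: "'a set \<Rightarrow> ('a \<Rightarrow> 'a \<Rightarrow> bool) \<Rightarrow> bool" where
  "no_cut_vertex V E \<longleftrightarrow> (\<forall>v\<in>V. graph_connected (V - {v}) E)"

definition simple_graph :: "'a set \<Rightarrow> ('a \<Rightarrow> 'a \<Rightarrow> bool) \<Rightarrow> bool" where
  "simple_graph V E \<longleftrightarrow> finite V \<and> (\<forall>a b. E a b \<longrightarrow> a \<in> V \<and> b \<in> V \<and> E b a \<and> a \<noteq> b)"

definition gdist :: "'a set \<Rightarrow> ('a \<Rightarrow> 'a \<Rightarrow> bool) \<Rightarrow> 'a \<Rightarrow> 'a \<Rightarrow> nat" where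
  "gdist V E a b = (LEAST n. (adj_in E V ^^ n) a b)"

definition bfs_tree :: "'a set \<Rightarrow> ('a \<Rightarrow> 'a \<Rightarrow> bool) \<Rightarrow> 'a \<Rightarrow> ('a \<Rightarrow> 'a) \<Rightarrow> bool" where
  "bfs_tree V E s par \<longleftrightarrow> s \<in> V \<and>
     (\<forall>v\<in>V - {s}. par v \<in> V \<and> E v (par v) \<and> gdist V E s v = gdist V E s (par v) + 1)"

text \<open>tanc V s par a v: a is an ancestor of v in T (a lies on pi(s,v)), reflexive.\<close>
definition tanc :: "'a set \<Rightarrow> 'a \<Rightarrow> ('a \<Rightarrow> 'a) \<Rightarrow> 'a \<Rightarrow> 'a \<Rightarrow> bool" where
  "tanc V s par a v \<longleftrightarrow> (\<lambda>c p. c \<in> V \<and> c \<noteq> s \<and> p = par c)\<^sup>*\<^sup>* v a"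

definition subtree :: "'a set \<Rightarrow> 'a \<Rightarrow> ('a \<Rightarrow> 'a) \<Rightarrow> 'a \<Rightarrow> 'a set" where
  "subtree V s par x = {v \<in> V. tanc V s par x v}"

definition tchildren :: "'a set \<Rightarrow> 'a \<Rightarrow> ('a \<Rightarrow> 'a) \<Rightarrow> 'a \<Rightarrow> 'a set" where
  "tchildren V s par x = {c \<in> V. c \<noteq> s \<and> par c = x}"

definition heavy_child :: "'a set \<Rightarrow> 'a \<Rightarrow> ('a \<Rightarrow> 'a) \<Rightarrow> 'a \<Rightarrow> 'a \<Rightarrow> bool" where
  "heavy_child V s par x h \<longleftrightarrow> h \<in> tchildren V s par x \<and>
     (\<forall>c\<in>tchildren V s par x. card (subtree V s par c) \<le> card (subtree V s par h))"

definition is_lca :: "'a set \<Rightarrow> 'a \<Rightarrow> ('a \<Rightarrow> 'a) \<Rightarrow> 'a set \<Rightarrow> 'a \<Rightarrow> bool" where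
  "is_lca V s par R r \<longleftrightarrow> r \<in> V \<and> (\<forall>w\<in>R. tanc V s par r w) \<and>
     (\<forall>a\<in>V. (\<forall>w\<in>R. tanc V s par a w) \<longrightarrow> tanc V s par a r)"

end

theory Submission
  imports Defs
begin

lemma tanc_depth:
  assumes bfs: "bfs_tree V E s par" and t: "tanc V s par a v"
  shows "a = v \<or> gdist V E s a < gdist V E s v"
proof -
  have "(\<lambda>c p. c \<in> V \<and> c \<noteq> s \<and> p = par c)\<^sup>*\<^sup>* v a" using t unfolding tanc_def .
  then show ?thesis
  proof (induction rule: rtranclp_induct)
    case base then show ?case by simp
  next
    case (step b c)
    have "gdist V E s b = gdist V E s c + 1" using bfs step(2) unfolding bfs_tree_def by auto
    then show ?case using step(3) by auto
  qed
qed

lemma path_up: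
  assumes bfs: "bfs_tree V E s par" and sym: "\<And>a b. E a b \<Longrightarrow> E b a"
  shows "\<And>w. w \<in> V \<Longrightarrow> gdist V E s w = n \<Longrightarrow> \<not> tanc V s par x w \<Longrightarrow> \<not> tanc V s par y w
    \<Longrightarrow> (adj_in E (V - {x, y}))\<^sup>*\<^sup>* s w"
proof (induction n rule: less_induct)
  case (less n w)
  show ?case
  proof (cases "w = s")
    case True then show ?thesis by simp
  next
    case False
    have p: "par w \<in> V" "E w (par w)" "gdist V E s w = gdist V E s (par w) + 1"
      using bfs less.prems(1) False unfolding bfs_tree_def by auto
    have st: "(\<lambda>c p. c \<in> V \<and> c \<noteq> s \<and> p = par c) w (par w)" using less.prems(1) False by simp
    have nx: "\<not> tanc V s par x (par w)"
      using less.prems(3) converse_rtranclp_into_rtranclp[where r="\<lambda>c p. c \<in> V \<and> c \<noteq> s \<and> p = par c", OF st] unfolding tanc_def by blast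
    have ny: "\<not> tanc V s par y (par w)"
      using less.prems(4) converse_rtranclp_into_rtranclp[where r="\<lambda>c p. c \<in> V \<and> c \<noteq> s \<and> p = par c", OF st] unfolding tanc_def by blast
    have ih: "(adj_in E (V - {x, y}))\<^sup>*\<^sup>* s (par w)"
      using less.IH[of "gdist V E s (par w)" "par w"] p less.prems(2) nx ny by auto
    have "x \<noteq> w" "y \<noteq> w" "x \<noteq> par w" "y \<noteq> par w"
      using less.prems(3,4) nx ny unfolding tanc_def by auto
    then have "adj_in E (V - {x, y}) (par w) w"
      unfolding adj_in_def using p less.prems(1) sym by auto
    then show ?thesis using ih by (meson rtranclp.rtrancl_into_rtrancl)
  qed
qed

theorem mainTheorem12:
  fixes V :: "'a set" and E :: "'a \<Rightarrow> 'a \<Rightarrow> bool" and s x xh u v r y :: 'a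
    and par :: "'a \<Rightarrow> 'a"
  assumes graph: "simple_graph V E"
    and conn: "graph_connected V E"
    and nocut: "no_cut_vertex V E"
    and bfs: "bfs_tree V E s par"
    and xV: "x \<in> V"
    and nonleaf: "tchildren V s par x \<noteq> {}"
    and heavy: "heavy_child V s par x xh"
    and H_def: "H = {w \<in> subtree V s par x - {x}. reach_in E (subtree V s par x - {x}) xh w}"
    and edge: "E u v" and vH: "v \<in> H" and uout: "u \<in> V - subtree V s par x"
    and R_def: "R = {w \<in> V - subtree V s par x. \<exists>h\<in>H. E w h}"
    and lca: "is_lca V s par R r"
    and y_on_path: "tanc V s par y u"
    and y_below: "tanc V s par r y" and y_ne: "y \<noteq> r"
  shows "\<exists>h\<in>H. reach_in E (V - {x, y}) s h"
proof -
  have sym: "\<And>a b. E a b \<Longrightarrow> E b a" using graph unfolding simple_graph_def by auto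
  have yV: "y \<in> V"
  proof -
    have "(\<lambda>c p. c \<in> V \<and> c \<noteq> s \<and> p = par c)\<^sup>*\<^sup>* u y" using y_on_path unfolding tanc_def .
    then show ?thesis
    proof (induction rule: rtranclp_induct)
      case base then show ?case using uout by simp
    next
      case (step b c) then show ?case using bfs unfolding bfs_tree_def by auto
    qed
  qed
  have "\<exists>w\<in>R. \<not> tanc V s par y w"
  proof (rule ccontr)
    assume "\<not> ?thesis"
    then have "tanc V s par y r" using lca yV unfolding is_lca_def by auto
    then have "y = r \<or> gdist V E s y < gdist V E s r" by (rule tanc_depth[OF bfs])
    then show False using tanc_depth[OF bfs y_below] y_ne by auto
  qed
  then obtain w h where wR: "w \<in> R" and wy: "\<not> tanc V s par y w" and hH: "h \<in> H" and ewh: "E w h"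
    using R_def by auto
  have wV: "w \<in> V" and wx: "\<not> tanc V s par x w" using wR R_def unfolding subtree_def by auto
  have hsub: "h \<in> V" "tanc V s par x h" "h \<noteq> x" using hH H_def unfolding subtree_def by auto
  have "\<not> tanc V s par x y"
  proof
    assume "tanc V s par x y"
    then have "tanc V s par x u" using y_on_path unfolding tanc_def by (meson rtranclp_trans)
    then show False using uout unfolding subtree_def by auto
  qed
  then have hy: "h \<noteq> y" using hsub by auto
  have "w \<noteq> x" "w \<noteq> y" using wx wy unfolding tanc_def by auto
  then have a: "adj_in E (V - {x, y}) w h" unfolding adj_in_def using wV hsub hy ewh by auto
  have b: "(adj_in E (V - {x, y}))\<^sup>*\<^sup>* s w" using path_up[OF bfs sym wV refl wx wy] .
  have sV: "s \<in> V - {x, y}"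
  proof -
    have "s \<in> V" using bfs unfolding bfs_tree_def by auto
    moreover have "s \<noteq> x" "s \<noteq> y"
      using b a unfolding adj_in_def
      by (metis (no_types, lifting) Diff_iff converse_rtranclpE insertCI)+
    ultimately show ?thesis by auto
  qed
  have "reach_in E (V - {x, y}) s h"
    unfolding reach_in_def using sV a b by (auto simp: adj_in_def intro: rtranclp.rtrancl_into_rtrancl)
  then show ?thesis using hH by auto
qed

end
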